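(* Let $p$ be a prime and $n,r\geq 0$ integers. Then $B_{n+p^r,-r}\equiv B_{n,-r+1}\pmod p$.
   Context: For any integer $s\in\mathbb{Z}$, the $s$-Bell numbers $B_{n,s}$ ($n\geq0$) are defined by $\sum_{n\geq0}B_{n,s}\frac{t^n}{n!}=e^{e^t-1+st}$. *)

theory Defs
  imports "HOL-Computational_Algebra.Formal_Power_Series"
begin

definition sbell_egf :: "int \<Rightarrow> rat fps" where
  "sbell_egf s = fps_exp 1 oo (fps_exp 1 - 1 + fps_const (of_int s) * fps_X)"

definition sbell :: "nat \<Rightarrow> int \<Rightarrow> rat" where
  "sbell n s = fact n * fps_nth (sbell_egf s) n"

end

theory Submission
  imports Defs "HOL-Number_Theory.Number_Theory" "HOL-Computational_Algebra.Polynomial"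
begin


lemma sbell_egf_deriv:
  "fps_deriv (sbell_egf s) = sbell_egf s * (fps_exp 1 + fps_const (of_int s))"
proof -
  let ?b = "fps_exp (1::rat) - 1 + fps_const (of_int s) * fps_X"
  have b0: "fps_nth ?b 0 = 0" by simp
  have "fps_deriv (sbell_egf s) = (fps_deriv (fps_exp 1) oo ?b) * fps_deriv ?b"
    unfolding sbell_egf_def by (rule fps_compose_deriv[OF b0])
  also have "\<dots> = sbell_egf s * (fps_exp 1 + fps_const (of_int s))"
    by (simp add: sbell_egf_def)
  finally show ?thesis .
qed

lemma sbell_0: "sbell 0 s = 1"
  by (simp add: sbell_def sbell_egf_def)

lemma sbell_rec:
  "sbell (Suc n) s = (\<Sum>k\<le>n. of_nat (n choose k) * sbell k s) + of_int s * sbell n s"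
proof -
  let ?G = "sbell_egf s"
  have "fps_nth (fps_deriv ?G) n = fps_nth (?G * (fps_exp 1 + fps_const (of_int s))) n"
    by (simp only: sbell_egf_deriv)
  hence eq: "of_nat (n+1) * fps_nth ?G (n+1) = (\<Sum>i=0..n. fps_nth ?G i * (1 / fact (n - i))) + fps_nth ?G n * of_int s"
    by (simp add: distrib_left fps_mult_nth mult_delta_right)
  have "sbell (Suc n) s = fact n * (of_nat (n+1) * fps_nth ?G (n+1))"
    by (simp add: sbell_def algebra_simps)
  also have "\<dots> = (\<Sum>i=0..n. fact n * (fps_nth ?G i * (1 / fact (n - i)))) + of_int s * sbell n s"
    unfolding eq by (simp add: sbell_def sum_distrib_left algebra_simps)
  also have "(\<Sum>i=0..n. fact n * (fps_nth ?G i * (1 / fact (n - i)))) = (\<Sum>k\<le>n. of_nat (n choose k) * sbell k s)"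
    unfolding atMost_atLeast0[symmetric]
  proof (rule sum.cong[OF refl])
    fix k assume "k \<in> {..n}"
    hence "k \<le> n" by simp
    from fact_binomial[OF this, where 'a=rat]
    show "fact n * (fps_nth ?G k * (1 / fact (n - k))) = of_nat (n choose k) * sbell k s"
      by (simp add: sbell_def field_simps)
  qed
  finally show ?thesis .
qed


lemma sbell_Ints: "sbell n s \<in> \<int>"
proof (induction n rule: less_induct)
  case (less n)
  show ?case
  proof (cases n)
    case 0 thus ?thesis by (simp add: sbell_0)
  next
    case (Suc m)
    have "\<forall>k\<in>{..m}. of_nat (m choose k) * sbell k s \<in> \<int>"
      using less Suc by auto
    hence "(\<Sum>k\<le>m. of_nat (m choose k) * sbell k s) \<in> \<int>"
      by (intro Ints_sum) auto
    moreover have "of_int s * sbell m s \<in> \<int>" using less Suc by auto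
    ultimately show ?thesis unfolding Suc sbell_rec by auto
  qed
qed

definition bz :: "int \<Rightarrow> nat \<Rightarrow> int" where "bz s n = \<lfloor>sbell n s\<rfloor>"

lemma of_int_bz: "(of_int (bz s n) :: rat) = sbell n s"
  unfolding bz_def using sbell_Ints[of n s] by (metis Ints_cases floor_of_int)

lemma bz_0: "bz s 0 = 1"
  unfolding bz_def by (simp add: sbell_0)

lemma bz_rec: "bz s (Suc n) = (\<Sum>k\<le>n. int (n choose k) * bz s k) + s * bz s n"
proof -
  have "(of_int (bz s (Suc n)) :: rat) = of_int ((\<Sum>k\<le>n. int (n choose k) * bz s k) + s * bz s n)"
    by (simp add: of_int_bz sbell_rec)
  thus ?thesis by (simp only: of_int_eq_iff)
qed




definition Lf :: "(nat \<Rightarrow> int) \<Rightarrow> int poly \<Rightarrow> int" where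
  "Lf a f = (\<Sum>j\<le>degree f. coeff f j * a j)"

lemma Lf_alt: "degree f \<le> N \<Longrightarrow> Lf a f = (\<Sum>j\<le>N. coeff f j * a j)"
  unfolding Lf_def
  by (rule sum.mono_neutral_left) (auto simp: coeff_eq_0)

lemma Lf_add: "Lf a (f + g) = Lf a f + Lf a g"
proof -
  let ?N = "max (degree f) (degree g)"
  have "degree (f + g) \<le> ?N" by (rule degree_add_le) auto
  thus ?thesis
    by (simp add: Lf_alt[of _ ?N] sum.distrib algebra_simps)
qed

lemma Lf_smult: "Lf a (smult c f) = c * Lf a f"
proof -
  have "degree (smult c f) \<le> degree f" by simp
  thus ?thesis by (simp add: Lf_alt[of _ "degree f"] Lf_def sum_distrib_left algebra_simps)
qed

lemma Lf_0[simp]: "Lf a 0 = 0"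
  by (simp add: Lf_def)

lemma Lf_uminus: "Lf a (- f) = - Lf a f"
  using Lf_smult[of a "-1" f] by simp

lemma Lf_diff: "Lf a (f - g) = Lf a f - Lf a g"
  using Lf_add[of a f "-g"] Lf_uminus[of a g] by simp

lemma Lf_sum: "Lf a (\<Sum>i\<in>A. g i) = (\<Sum>i\<in>A. Lf a (g i))"
  by (induction A rule: infinite_finite_induct) (auto simp: Lf_add)

lemma Lf_Xpow: "Lf a ([:0,1:] ^ n) = a n"
proof -
  have "[:0,1:] ^ n = (monom 1 n :: int poly)" by (simp add: monom_altdef)
  moreover have "(\<Sum>j\<le>n. (if n = j then 1 else 0) * a j) = (\<Sum>j\<le>n. if n = j then a j else 0)"
    by (rule sum.cong) auto
  ultimately show ?thesis by (simp add: Lf_def degree_monom_eq coeff_monom)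
qed

lemma lin_ext:
  fixes F G :: "int poly \<Rightarrow> int"
  assumes "\<And>f g. F (f + g) = F f + F g" "\<And>c f. F (smult c f) = c * F f"
    "\<And>f g. G (f + g) = G f + G g" "\<And>c f. G (smult c f) = c * G f"
    "\<And>n. F ([:0,1:] ^ n) = G ([:0,1:] ^ n)"
  shows "F f = G f"
proof -
  have sF: "F (\<Sum>i\<in>A. g i) = (\<Sum>i\<in>A. F (g i))" for A g
  proof (induction A rule: infinite_finite_induct)
    case (infinite A) then show ?case using assms(2)[of 0 0] by simp
  next
    case empty then show ?case using assms(2)[of 0 0] by simp
  next
    case (insert x F) then show ?case by (simp add: assms(1))
  qed
  have sG: "G (\<Sum>i\<in>A. g i) = (\<Sum>i\<in>A. G (g i))" for A g
  proof (induction A rule: infinite_finite_induct)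
    case (infinite A) then show ?case using assms(4)[of 0 0] by simp
  next
    case empty then show ?case using assms(4)[of 0 0] by simp
  next
    case (insert x F) then show ?case by (simp add: assms(3))
  qed
  have f: "f = (\<Sum>i\<le>degree f. smult (coeff f i) ([:0,1:] ^ i))"
    using poly_as_sum_of_monoms[of f] by (simp add: monom_altdef)
  have "F f = (\<Sum>i\<le>degree f. coeff f i * F ([:0,1:] ^ i))"
    by (subst f) (simp add: sF assms(2))
  also have "\<dots> = (\<Sum>i\<le>degree f. coeff f i * G ([:0,1:] ^ i))"
    by (simp add: assms(5))
  also have "\<dots> = G f"
    by (subst (2) f) (simp add: sG assms(4))
  finally show ?thesis .
qed

lemma coeff_lin_pow: "coeff ([:1,1:] ^ n :: int poly) j = int (n choose j)"
proof (induction n arbitrary: j)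
  case 0 then show ?case by (cases j) auto
next
  case (Suc n)
  have e: "[:1,1:] ^ Suc n = [:1,1:] ^ n + pCons 0 ([:1,1:] ^ n :: int poly)"
    by (simp add: mult_pCons_left)
  show ?case
    by (cases j) (simp_all add: e Suc)
qed

lemma Lf_lin_pow: "Lf a ([:1,1:] ^ n) = (\<Sum>k\<le>n. int (n choose k) * a k)"
  by (simp add: Lf_def degree_linear_power coeff_lin_pow)


lemma pcompose_X: "pcompose [:0,1:] (q::int poly) = q"
  by (simp add: pcompose_pCons)

lemma pcompose_Xpow: "pcompose ([:0,1:] ^ n) (q::int poly) = q ^ n"
proof (induction n)
  case (Suc n)
  have "pcompose ([:0,1:] ^ Suc n) q = pcompose [:0,1:] q * pcompose ([:0,1:] ^ n) q"
    by (simp only: power_Suc pcompose_mult)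
  thus ?case by (simp only: pcompose_X Suc power_Suc)
qed (simp add: pcompose_1)

lemma Lf_shift: "Lf (bz s) ([:-s,1:] * f) = Lf (bz s) (pcompose f [:1,1:])"
proof (rule lin_ext[where F="\<lambda>f. Lf (bz s) ([:-s,1:] * f)" and G="\<lambda>f. Lf (bz s) (pcompose f [:1,1:])"])
  fix n
  have e: "[:-s,1:] * [:0,1:] ^ n = [:0,1:] ^ Suc n - smult s ([:0,1:] ^ n)"
    by (simp add: mult_pCons_left algebra_simps)
  show "Lf (bz s) ([:-s,1:] * [:0,1:] ^ n) = Lf (bz s) (pcompose ([:0,1:] ^ n) [:1,1:])"
    unfolding e pcompose_Xpow
    by (simp only: Lf_diff Lf_smult Lf_Xpow Lf_lin_pow bz_rec)
qed (simp_all add: Lf_add Lf_smult distrib_left pcompose_add pcompose_smult)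

lemma Lf_fall: "Lf (bz s) ((\<Prod>i<k. [:-s - int i,1:]) * f) = Lf (bz s) (pcompose f [:int k,1:])"
proof (induction k arbitrary: f)
  case 0 then show ?case by simp
next
  case (Suc k)
  have "Lf (bz s) ((\<Prod>i<Suc k. [:-s - int i,1:]) * f) =
        Lf (bz s) ((\<Prod>i<k. [:-s - int i,1:]) * ([:-s - int k,1:] * f))"
    by (simp add: algebra_simps)
  also have "\<dots> = Lf (bz s) (pcompose ([:-s - int k,1:] * f) [:int k,1:])"
    by (rule Suc)
  also have "pcompose ([:-s - int k,1:] * f) [:int k,1:] = [:-s,1:] * pcompose f [:int k,1:]"
    by (simp only: pcompose_mult) (simp add: pcompose_pCons)
  also have "Lf (bz s) \<dots> = Lf (bz s) (pcompose (pcompose f [:int k,1:]) [:1,1:])"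
    by (rule Lf_shift)
  also have "pcompose (pcompose f [:int k,1:]) [:1,1:] = pcompose f [:int (Suc k),1:]"
    by (simp add: pcompose_assoc[symmetric] pcompose_pCons add.commute)
  finally show ?case .
qed




definition cP :: "nat \<Rightarrow> int poly \<Rightarrow> int poly \<Rightarrow> bool" where
  "cP p f g \<longleftrightarrow> (\<exists>h. f = g + smult (int p) h)"

lemma cP_refl: "cP p f f"
  unfolding cP_def by (auto intro: exI[of _ 0])

lemma cP_sym: "cP p f g \<Longrightarrow> cP p g f"
proof -
  assume "cP p f g"
  then obtain h where "f = g + smult (int p) h" unfolding cP_def by blast
  hence "g = f + smult (int p) (- h)" by simp
  thus ?thesis unfolding cP_def by blast
qed

lemma cP_trans: "cP p f g \<Longrightarrow> cP p g k \<Longrightarrow> cP p f k"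
proof -
  assume "cP p f g" "cP p g k"
  then obtain h h' where "f = g + smult (int p) h" "g = k + smult (int p) h'" unfolding cP_def by blast
  hence "f = k + smult (int p) (h' + h)" by (simp add: smult_add_right)
  thus ?thesis unfolding cP_def by blast
qed

lemma cP_add: "cP p f g \<Longrightarrow> cP p f' g' \<Longrightarrow> cP p (f + f') (g + g')"
proof -
  assume "cP p f g" "cP p f' g'"
  then obtain h h' where "f = g + smult (int p) h" "f' = g' + smult (int p) h'" unfolding cP_def by blast
  hence "f + f' = (g + g') + smult (int p) (h + h')" by (simp add: smult_add_right)
  thus ?thesis unfolding cP_def by blast
qed

lemma cP_uminus: "cP p f g \<Longrightarrow> cP p (- f) (- g)"
proof -
  assume "cP p f g"
  then obtain h where "f = g + smult (int p) h" unfolding cP_def by blast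
  hence "- f = - g + smult (int p) (- h)" by simp
  thus ?thesis unfolding cP_def by blast
qed

lemma cP_diff: "cP p f g \<Longrightarrow> cP p f' g' \<Longrightarrow> cP p (f - f') (g - g')"
  using cP_add[OF _ cP_uminus] by (simp add: diff_conv_add_uminus del: add_uminus_conv_diff)

lemma cP_mult: "cP p f g \<Longrightarrow> cP p f' g' \<Longrightarrow> cP p (f * f') (g * g')"
proof -
  assume "cP p f g" "cP p f' g'"
  then obtain h h' where "f = g + smult (int p) h" "f' = g' + smult (int p) h'"
    unfolding cP_def by blast
  hence "f * f' = g * g' + smult (int p) (h * g' + g * h' + smult (int p) (h * h'))"
    by (simp add: algebra_simps smult_add_right)
  thus ?thesis unfolding cP_def by blast
qed

lemma cP_power: "cP p f g \<Longrightarrow> cP p (f ^ n) (g ^ n)"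
  by (induction n) (simp_all add: cP_refl cP_mult)

lemma cP_pcompose1: "cP p f g \<Longrightarrow> cP p (pcompose f q) (pcompose g q)"
  unfolding cP_def by (auto simp: pcompose_add pcompose_smult)

lemma cP_pcompose2: "cP p q q' \<Longrightarrow> cP p (pcompose f q) (pcompose f q')"
proof (induction f rule: pCons_induct)
  case 0 then show ?case by (simp add: cP_refl)
next
  case (pCons a f)
  then show ?case
    by (simp add: pcompose_pCons cP_add cP_mult cP_refl)
qed

lemma cP_const: "[c = d] (mod int p) \<Longrightarrow> cP p [:c:] [:d:]"
proof -
  assume "[c = d] (mod int p)"
  then obtain k where "c = d + int p * k"
    by (metis cong_iff_lin cong_sym)
  hence "[:c:] = [:d:] + smult (int p) [:k:]" by simp
  thus ?thesis unfolding cP_def by blast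
qed

lemma cP_Lf: "cP p f g \<Longrightarrow> int p dvd Lf a f - Lf a g"
  unfolding cP_def by (auto simp: Lf_add Lf_smult)

lemma cP_coeff: "cP p f g \<Longrightarrow> int p dvd coeff f j - coeff g j"
  unfolding cP_def by auto

lemma cP_coeffI: assumes "\<And>j. int p dvd coeff f j - coeff g j" shows "cP p f g"
proof -
  define h where "h = map_poly (\<lambda>c. c div int p) (f - g)"
  have "coeff (f - g) j = coeff (smult (int p) h) j" for j
    using assms[of j] unfolding h_def
    by (simp add: coeff_map_poly)
  hence "f - g = smult (int p) h" by (simp add: poly_eq_iff)
  hence "f = g + smult (int p) h" by (simp add: algebra_simps)
  thus ?thesis unfolding cP_def by blast
qed

lemma smult_sum_right: "smult c (\<Sum>i\<in>A. f i) = (\<Sum>i\<in>A. smult c (f i))"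
  by (induction A rule: infinite_finite_induct) (auto simp: smult_add_right)

lemma freshman:
  fixes f g :: "int poly"
  assumes p: "prime p"
  shows "cP p ((f + g) ^ p) (f ^ p + g ^ p)"
proof -
  have p0: "p > 0" using p prime_gt_0_nat by blast
  have "(f + g) ^ p = (\<Sum>k\<le>p. of_nat (p choose k) * f ^ k * g ^ (p - k))"
    by (rule binomial_ring)
  also have "\<dots> = (\<Sum>k\<in>{..p} - {0,p}. of_nat (p choose k) * f ^ k * g ^ (p - k))
       + (\<Sum>k\<in>{0,p}. of_nat (p choose k) * f ^ k * g ^ (p - k))"
    by (rule sum.subset_diff) auto
  also have "(\<Sum>k\<in>{0,p}. of_nat (p choose k) * f ^ k * g ^ (p - k)) = f ^ p + g ^ p"
    using p0 by simp
  also have "(\<Sum>k\<in>{..p} - {0,p}. of_nat (p choose k) * f ^ k * g ^ (p - k))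
      = smult (int p) (\<Sum>k\<in>{..p} - {0,p}. smult (int ((p choose k) div p)) (f ^ k * g ^ (p - k)))"
    unfolding smult_sum_right
  proof (rule sum.cong[OF refl])
    fix k assume "k \<in> {..p} - {0,p}"
    hence "p dvd (p choose k)" using p by (intro dvd_choose_prime) auto
    hence e: "p choose k = p * ((p choose k) div p)" by simp
    show "of_nat (p choose k) * f ^ k * g ^ (p - k) =
          smult (int p) (smult (int ((p choose k) div p)) (f ^ k * g ^ (p - k)))"
      by (subst e) (simp add: of_nat_mult_conv_smult mult.assoc)
  qed
  finally have eq: "(f + g) ^ p = smult (int p) (\<Sum>k\<in>{..p} - {0,p}. smult (int ((p choose k) div p)) (f ^ k * g ^ (p - k))) + (f ^ p + g ^ p)" .
  show ?thesis unfolding cP_def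
    by (rule exI[where x="\<Sum>k\<in>{..p} - {0,p}. smult (int ((p choose k) div p)) (f ^ k * g ^ (p - k))"])
      (simp only: eq add.commute)
qed

lemma fermat_int:
  fixes a :: int
  assumes p: "prime p"
  shows "[a ^ p = a] (mod int p)"
proof -
  define m where "m = nat (a mod int p)"
  have p0: "p > 0" using p prime_gt_0_nat by blast
  have am: "[a = int m] (mod int p)"
    unfolding m_def using p0 by (simp add: cong_def)
  have "[m ^ p = m] (mod p)"
  proof (cases "p dvd m")
    case True
    have "p dvd m ^ p" using True p0 by (simp add: dvd_power_iff_le dvd_trans[OF True])
    hence "m ^ p mod p = 0" "m mod p = 0" using True by auto
    then show ?thesis unfolding cong_def by simp
  next
    case False
    from fermat_theorem[OF p False] have "[m ^ (p - 1) * m = 1 * m] (mod p)"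
      by (rule cong_mult) (rule cong_refl)
    moreover have "m ^ (p - 1) * m = m ^ p" using p0
      by (simp add: power_Suc2[symmetric])
    ultimately show ?thesis by simp
  qed
  hence "[int m ^ p = int m] (mod int p)"
    by (simp add: cong_int_iff[symmetric])
  moreover have "[a ^ p = int m ^ p] (mod int p)" by (rule cong_pow[OF am])
  ultimately have "[a ^ p = int m] (mod int p)" by (meson cong_trans)
  thus ?thesis using am by (meson cong_sym cong_trans)
qed




lemma coeff_shift1:
  assumes "degree g \<le> N"
  shows "coeff (pcompose g [:1,1:]) k = (\<Sum>i\<le>N. coeff g i * int (i choose k))"
proof -
  have "pcompose g [:1,1:] = pcompose (\<Sum>i\<le>N. monom (coeff g i) i) [:1,1:]"
    by (simp only: poly_as_sum_of_monoms'[OF assms])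
  also have "\<dots> = (\<Sum>i\<le>N. smult (coeff g i) ([:1,1:]^i))"
    by (simp add: pcompose_sum monom_altdef pcompose_smult pcompose_Xpow)
  finally show ?thesis
    by (simp add: coeff_sum coeff_lin_pow)
qed

lemma fall_shift:
  "pcompose (\<Prod>i<Suc m. [:-int i,1:]) [:1,1:] =
     (\<Prod>i<Suc m. [:-int i,1:]) + smult (int (Suc m)) (\<Prod>i<m. [:-int i,1:])"
proof -
  let ?R = "\<Prod>i<m. [:-int i,1:] :: int poly"
  have "pcompose (\<Prod>i<Suc m. [:-int i,1:]) [:1,1:] = (\<Prod>i<Suc m. [:1 - int i,1:])"
    unfolding pcompose_prod by (rule prod.cong) (simp_all add: pcompose_pCons)
  also have "\<dots> = [:1,1:] * (\<Prod>i<m. [:1 - int (Suc i),1:])"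
    by (subst prod.lessThan_Suc_shift) simp
  also have "(\<Prod>i<m. [:1 - int (Suc i),1:]) = ?R"
    by (rule prod.cong) auto
  also have "[:1,1:] * ?R = ?R * [:-int m,1:] + smult (int (Suc m)) ?R"
    by (simp add: algebra_simps mult_pCons_left smult_add_left)
  also have "?R * [:-int m,1:] = (\<Prod>i<Suc m. [:-int i,1:])"
    by simp
  finally show ?thesis .
qed

lemma fallfact_cong:
  assumes p: "prime p"
  shows "cP p (\<Prod>i<p. [:-int i,1:]) ([:0,1:]^p - [:0,1:])"
proof -
  define P where "P = (\<Prod>i<p. [:-int i,1:] :: int poly)"
  define Q where "Q = ([:0,1:]^p - [:0,1:] :: int poly)"
  define g where "g = P - Q"
  have p2: "p \<ge> 2" using p prime_ge_2_nat by blast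
  obtain m where pm: "p = Suc m" using p2 by (cases p) auto
  have a: "cP p (pcompose P [:1,1:]) P"
    unfolding P_def pm fall_shift cP_def by blast
  have "cP p (([:0,1:] + 1) ^ p) ([:0,1:]^p + 1)"
    using freshman[OF p, of "[:0,1:]" 1] by simp
  hence "cP p (([:0,1:] + 1) ^ p - ([:0,1:] + 1)) ([:0,1:]^p + 1 - ([:0,1:] + 1))"
    by (intro cP_diff cP_refl)
  moreover have "[:0,1:]^p + 1 - ([:0,1:] + 1) = ([:0,1:]^p - [:0,1:] :: int poly)"
    by (rule add_diff_cancel_right)
  moreover have e2: "[:1,1:] = [:0,1:] + (1::int poly)" by (simp add: one_pCons)
  moreover have "pcompose Q [:1,1:] = ([:0,1:] + 1) ^ p - ([:0,1:] + 1)"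
    unfolding Q_def pcompose_diff pcompose_Xpow pcompose_X e2 ..
  ultimately have b: "cP p (pcompose Q [:1,1:]) Q"
    unfolding Q_def by simp
  have c: "cP p (pcompose g [:1,1:]) g"
    unfolding g_def pcompose_diff by (rule cP_diff[OF a b])
  have degP: "degree P = p"
    unfolding P_def by (subst degree_prod_eq_sum_degree) auto
  have lcP: "coeff P p = 1"
    using lead_coeff_prod[of "\<lambda>i. [:-int i,1:]" "{..<p}"] degP unfolding P_def by simp
  have cQ: "coeff Q j = (if j = p then 1 else 0) - (if j = 1 then 1 else 0)" for j
    unfolding Q_def by (simp add: monom_altdef[of 1, simplified, symmetric] coeff_monom coeff_pCons split: nat.split)
  have d: "coeff g j = 0" if "j \<ge> p" for j
  proof (cases "j = p")
    case True thus ?thesis using lcP cQ[of j] p2 by (simp add: g_def)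
  next
    case False thus ?thesis using that degP cQ[of j] p2 by (simp add: g_def coeff_eq_0)
  qed
  have degg: "degree g \<le> p"
    by (rule degree_le) (auto intro: d)
  have e: "coeff g 0 = 0"
  proof -
    have "coeff P 0 = poly P 0" by (simp add: poly_0_coeff_0)
    also have "\<dots> = 0" unfolding P_def poly_prod using p2
      by (intro prod_zero) (auto intro!: bexI[of _ 0])
    finally show ?thesis using cQ[of 0] p2 by (simp add: g_def)
  qed
  have sh: "int p dvd (\<Sum>i\<le>p. coeff g i * int (i choose k)) - coeff g k" for k
    using cP_coeff[OF c, of k] unfolding coeff_shift1[OF degg] .
  have main: "\<forall>j. 0 < j \<longrightarrow> p - j \<le> t \<longrightarrow> int p dvd coeff g j" for t
  proof (induction t)
    case 0 then show ?case using d by auto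
  next
    case (Suc t)
    show ?case
    proof (intro allI impI)
      fix j assume j0: "0 < j" and jt: "p - j \<le> Suc t"
      show "int p dvd coeff g j"
      proof (cases "j \<ge> p")
        case True then show ?thesis using d by auto
      next
        case False
        hence jp: "j < p" by simp
        have IH: "int p dvd coeff g i" if "i > j" for i
          using Suc.IH that jt j0 by auto
        define k where "k = j - 1"
        have jk: "j = Suc k" using j0 k_def by simp
        have sub: "{k, j} \<subseteq> {..p}" using jp jk by auto
        have "(\<Sum>i\<le>p. coeff g i * int (i choose k)) =
              (\<Sum>i\<in>{..p} - {k,j}. coeff g i * int (i choose k)) + (\<Sum>i\<in>{k,j}. coeff g i * int (i choose k))"
          by (rule sum.subset_diff[OF sub]) simp
        also have "(\<Sum>i\<in>{k,j}. coeff g i * int (i choose k)) = coeff g k + coeff g j * int j"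
          using jk by simp
        finally have S: "(\<Sum>i\<le>p. coeff g i * int (i choose k)) - coeff g k =
              (\<Sum>i\<in>{..p} - {k,j}. coeff g i * int (i choose k)) + coeff g j * int j" by simp
        have "int p dvd (\<Sum>i\<in>{..p} - {k,j}. coeff g i * int (i choose k))"
        proof (rule dvd_sum)
          fix i assume i: "i \<in> {..p} - {k,j}"
          show "int p dvd coeff g i * int (i choose k)"
          proof (cases "i < k")
            case True then show ?thesis by (simp add: binomial_eq_0)
          next
            case False
            hence "i > j" using i jk by auto
            then show ?thesis using IH by simp
          qed
        qed
        hence "int p dvd coeff g j * int j"
          using sh[of k] unfolding S by (simp add: dvd_add_right_iff)
        moreover have "coprime (int p) (int j)"
          using p jp j0 by (simp add: prime_imp_coprime_nat nat_dvd_not_less)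
        ultimately show ?thesis
          using coprime_dvd_mult_left_iff by blast
      qed
    qed
  qed
  have "int p dvd coeff P j - coeff Q j" for j
  proof (cases "j = 0")
    case True then show ?thesis using e by (simp add: g_def)
  next
    case False then show ?thesis using main[of p] by (simp add: g_def)
  qed
  thus ?thesis unfolding P_def Q_def by (rule cP_coeffI)
qed




definition cI :: "nat \<Rightarrow> (nat \<Rightarrow> int) \<Rightarrow> int poly \<Rightarrow> int poly \<Rightarrow> bool" where
  "cI p a f g \<longleftrightarrow> (\<forall>h. int p dvd Lf a (f * h) - Lf a (g * h))"

lemma cI_refl: "cI p a f f" unfolding cI_def by simp

lemma cI_sym: "cI p a f g \<Longrightarrow> cI p a g f"
  unfolding cI_def by (simp add: dvd_diff_commute)

lemma cI_trans: "cI p a f g \<Longrightarrow> cI p a g k \<Longrightarrow> cI p a f k"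
  unfolding cI_def
proof (intro allI)
  fix h assume "\<forall>h. int p dvd Lf a (f * h) - Lf a (g * h)" "\<forall>h. int p dvd Lf a (g * h) - Lf a (k * h)"
  hence "int p dvd (Lf a (f * h) - Lf a (g * h)) + (Lf a (g * h) - Lf a (k * h))" by (intro dvd_add) auto
  thus "int p dvd Lf a (f * h) - Lf a (k * h)" by simp
qed

lemma cI_add: "cI p a f g \<Longrightarrow> cI p a f' g' \<Longrightarrow> cI p a (f + f') (g + g')"
  unfolding cI_def
proof (intro allI)
  fix h assume "\<forall>h. int p dvd Lf a (f * h) - Lf a (g * h)" "\<forall>h. int p dvd Lf a (f' * h) - Lf a (g' * h)"
  hence "int p dvd (Lf a (f * h) - Lf a (g * h)) + (Lf a (f' * h) - Lf a (g' * h))" by (intro dvd_add) auto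
  thus "int p dvd Lf a ((f + f') * h) - Lf a ((g + g') * h)"
    by (simp add: distrib_right Lf_add algebra_simps)
qed

lemma cI_multR: "cI p a f g \<Longrightarrow> cI p a (f * k) (g * k)"
  unfolding cI_def by (auto simp: mult.assoc)

lemma cI_mult: "cI p a f g \<Longrightarrow> cI p a f' g' \<Longrightarrow> cI p a (f * f') (g * g')"
proof -
  assume 1: "cI p a f g" and 2: "cI p a f' g'"
  have "cI p a (f * f') (g * f')" by (rule cI_multR[OF 1])
  moreover have "cI p a (f' * g) (g' * g)" by (rule cI_multR[OF 2])
  hence "cI p a (g * f') (g * g')" by (simp add: mult.commute)
  ultimately show ?thesis by (rule cI_trans)
qed

lemma cI_power: "cI p a f g \<Longrightarrow> cI p a (f ^ n) (g ^ n)"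
  by (induction n) (simp_all add: cI_refl cI_mult)

lemma cP_cI: "cP p f g \<Longrightarrow> cI p a f g"
  unfolding cI_def by (auto intro!: cP_Lf cP_mult cP_refl)

lemma const_power: "[:c:] ^ n = [:c ^ n:]"
  by (induction n) (simp_all add: one_pCons mult.commute)

lemma touchard:
  assumes p: "prime p"
  shows "cI p (bz s) ([:0,1:] ^ p) ([:0,1:] + 1)"
proof -
  define Ff where "Ff = (\<Prod>i<p. [:-s - int i,1:])"
  define X where "X = ([:0,1:] :: int poly)"
  define Y where "Y = ([:-s,1:] :: int poly)"
  have i: "cI p (bz s) Ff 1"
    unfolding cI_def
  proof
    fix h
    have "cP p [:int p,1:] [:0,1:]"
      unfolding cP_def by (rule exI[of _ 1]) (simp add: one_pCons)
    hence "cP p (pcompose h [:int p,1:]) h"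
      using cP_pcompose2 by fastforce
    hence "int p dvd Lf (bz s) (pcompose h [:int p,1:]) - Lf (bz s) h" by (rule cP_Lf)
    thus "int p dvd Lf (bz s) (Ff * h) - Lf (bz s) (1 * h)"
      unfolding Ff_def Lf_fall by simp
  qed
  have "Ff = pcompose (\<Prod>i<p. [:-int i,1:]) Y"
    unfolding Ff_def Y_def pcompose_prod by (rule prod.cong) (simp_all add: pcompose_pCons)
  moreover have "cP p (pcompose (\<Prod>i<p. [:-int i,1:]) Y) (pcompose ([:0,1:]^p - [:0,1:]) Y)"
    by (rule cP_pcompose1[OF fallfact_cong[OF p]])
  ultimately have ii: "cP p Ff (Y^p - Y)"
    by (simp add: pcompose_diff pcompose_Xpow pcompose_X)
  have eY: "Y = X + [:-s:]" unfolding X_def Y_def by simp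
  have "cP p (Y ^ p) (X ^ p + [:-s:] ^ p)" unfolding eY by (rule freshman[OF p])
  moreover have "cP p (X ^ p + [:-s:] ^ p) (X ^ p + [:-s:])"
    unfolding const_power by (intro cP_add cP_refl cP_const fermat_int[OF p])
  ultimately have "cP p (Y ^ p) (X ^ p + [:-s:])" by (rule cP_trans)
  hence "cP p (Y ^ p - Y) (X ^ p + [:-s:] - (X + [:-s:]))"
    unfolding eY by (intro cP_diff cP_refl)
  hence iii: "cP p (Y ^ p - Y) (X ^ p - X)" by simp
  have "cI p (bz s) (X ^ p - X) 1"
    using cP_cI[OF cP_trans[OF ii iii]] i by (meson cI_sym cI_trans)
  hence "cI p (bz s) (X ^ p - X + X) (1 + X)" by (intro cI_add cI_refl)
  thus ?thesis unfolding X_def by (simp add: add.commute)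
qed

lemma pow_cong:
  assumes p: "prime p"
  shows "cI p (bz s) ([:0,1:] ^ (p ^ k)) ([:0,1:] + [:int k:])"
proof (induction k)
  case 0 then show ?case by (simp add: cI_refl)
next
  case (Suc k)
  let ?X = "[:0,1:] :: int poly"
  have e0: "?X ^ (p ^ Suc k) = (?X ^ (p ^ k)) ^ p" by (simp only: power_Suc2 power_mult)
  have c1: "cI p (bz s) ((?X ^ (p ^ k)) ^ p) ((?X + [:int k:]) ^ p)"
    by (rule cI_power[OF Suc])
  have f1: "cP p ((?X + [:int k:]) ^ p) (?X ^ p + [:int k:] ^ p)" by (rule freshman[OF p])
  have f2: "cP p (?X ^ p + [:int k:] ^ p) (?X ^ p + [:int k:])"
    unfolding const_power by (intro cP_add cP_refl cP_const fermat_int[OF p])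
  have c2: "cI p (bz s) ((?X + [:int k:]) ^ p) (?X ^ p + [:int k:])"
    by (rule cP_cI[OF cP_trans[OF f1 f2]])
  have c3: "cI p (bz s) (?X ^ p + [:int k:]) (?X + 1 + [:int k:])"
    by (intro cI_add cI_refl touchard[OF p])
  have e4: "?X + 1 + [:int k:] = ?X + [:int (Suc k):]" by (simp add: one_pCons)
  show ?case
    unfolding e0 e4[symmetric] by (rule cI_trans[OF c1 cI_trans[OF c2 c3]])
qed

lemma pcompose_power: "pcompose (f ^ n) (r::int poly) = (pcompose f r) ^ n"
  by (induction n) (simp_all add: pcompose_mult pcompose_1)

lemma Lf_next: "Lf (bz s) ([:1,1:] ^ n) = bz (s + 1) n"
proof (induction n rule: less_induct)
  case (less n)
  show ?case
  proof (cases n)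
    case 0
    then show ?thesis using Lf_Xpow[of "bz s" 0] by (simp add: bz_0)
  next
    case (Suc m)
    let ?q = "[:1,1:] ^ m :: int poly"
    have e: "[:1,1:] ^ Suc m = [:-s,1:] * ?q + smult (s + 1) ?q"
      by (simp add: mult_pCons_left smult_add_left)
    have e2: "pcompose ?q [:1,1:] = ([:1,1:] + 1) ^ m"
      by (simp add: pcompose_power pcompose_pCons one_pCons)
    have "Lf (bz s) (([:1,1:] + 1) ^ m) = (\<Sum>k\<le>m. int (m choose k) * Lf (bz s) ([:1,1:] ^ k))"
      by (simp add: binomial_ring Lf_sum of_nat_mult_conv_smult Lf_smult)
    also have "\<dots> = (\<Sum>k\<le>m. int (m choose k) * bz (s + 1) k)"
      by (rule sum.cong[OF refl]) (use less Suc in auto)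
    finally have e3: "Lf (bz s) (([:1,1:] + 1) ^ m) = (\<Sum>k\<le>m. int (m choose k) * bz (s + 1) k)" .
    have "Lf (bz s) ([:1,1:] ^ n) = Lf (bz s) (pcompose ?q [:1,1:]) + (s + 1) * Lf (bz s) ?q"
      unfolding Suc e Lf_add Lf_smult Lf_shift ..
    also have "\<dots> = bz (s + 1) n"
      unfolding e2 e3 using less[of m] Suc by (simp add: bz_rec)
    finally show ?thesis .
  qed
qed

theorem proposition1:
  fixes p n r :: nat
  assumes "prime p"
  shows "sbell (n + p ^ r) (- int r) \<in> \<int> \<and> sbell n (- int r + 1) \<in> \<int> \<and>
         (\<exists>k::int. sbell (n + p ^ r) (- int r) - sbell n (- int r + 1) = of_int (int p * k))"
proof -
  define s where "s = - int r"
  have "cI p (bz s) ([:0,1:] ^ (p ^ r)) ([:0,1:] + [:int r:])" by (rule pow_cong[OF assms])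
  hence "int p dvd Lf (bz s) ([:0,1:] ^ (p ^ r) * [:0,1:] ^ n) - Lf (bz s) (([:0,1:] + [:int r:]) * [:0,1:] ^ n)"
    unfolding cI_def by blast
  moreover have "Lf (bz s) ([:0,1:] ^ (p ^ r) * [:0,1:] ^ n) = bz s (n + p ^ r)"
    by (simp add: power_add[symmetric] Lf_Xpow add.commute)
  moreover have "[:0,1:] + [:int r:] = [:-s, 1:]" unfolding s_def by simp
  moreover have "Lf (bz s) ([:-s, 1:] * [:0,1:] ^ n) = bz (s + 1) n"
    unfolding Lf_shift pcompose_Xpow Lf_next ..
  ultimately have "int p dvd bz s (n + p ^ r) - bz (s + 1) n" by simp
  then obtain k where k: "bz s (n + p ^ r) - bz (s + 1) n = int p * k" by blast
  have "sbell (n + p ^ r) s - sbell n (s + 1) = of_int (int p * k)"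
    unfolding of_int_bz[symmetric] k[symmetric] by simp
  thus ?thesis using sbell_Ints unfolding s_def by blast
qed


end
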